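(* Fix a permutation $P$ of $\{1,\dots,M\}$. Every point of $\mathcal{A}^*_{1;P}$ that is an extreme point of the convex hull of $\mathcal{A}^*_{1;P}$ is equal to $(R^P(\{q_k\}),D^P(\{q_k\}))$ for some test channels $q_k(z_k|x_k)$, $J+1\le k\le M$, whose output alphabets satisfy $|\mathcal Z_k|\le|\mathcal X_k|$ for all $J+1\le k\le M$.
   Context: Let $M\ge1$, $0\le J\le M$, $L\ge1$. Let $X_1,\dots,X_M,S,V$ be random variables on finite alphabets $\mathcal{X}_1,\dots,\mathcal{X}_M,\mathcal{S},\mathcal{V}$ with joint pmf $p(x_1,\dots,x_M,s,v)$. For $1\le l\le L$ let $\hat{\mathcal V}_l$ be a finite reconstruction alphabet and $d_l:\mathcal V\times\hat{\mathcal V}_l\to[0,d_{l,\max}]$ a bounded distortion measure. For $A\subseteq\{1,\dots,M\}$ write $Z_A=(Z_i)_{i\in A}$. Given finite alphabets $\mathcal Z_{J+1},\dots,\mathcal Z_M$ and test channels (conditional pmfs) $\{q_k(z_k|x_k)\}_{k=J+1}^M$, set $Z_m=X_m$ for $1\le m\le J$ and let $(X_1,\dots,X_M,S,V,Z_{J+1},\dots,Z_M)$ have joint pmf $p(x_1,\dots,x_M,s,v)\prod_{k=J+1}^M q_k(z_k|x_k)$. For a permutation $P$ of $\{1,\dots,M\}$ define $R^P(\{q_k\})\in\mathbb R^M$ by $R^P_{P(i)}=I(X_{P(i)};Z_{P(i)}\mid Z_{\{P(1),\dots,P(i-1)\}},S)$, $1\le i\le M$, and $D^P(\{q_k\})\in\mathbb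 R^L$ by $D^P_l=\min_{\psi_l}\mathbb E\,d_l(V,\psi_l(Z_1,\dots,Z_M,S))$, the minimum over all maps $\psi_l:\mathcal Z_1\times\dots\times\mathcal Z_M\times\mathcal S\to\hat{\mathcal V}_l$ (with $\mathcal Z_m=\mathcal X_m$ for $m\le J$). Let $\mathcal{A}^*_{1;P}(\{q_k\})=\{(R,D)\in\mathbb R^{M+L}: R_i\ge R^P_i(\{q_k\})\ \forall i,\ D_l\ge D^P_l(\{q_k\})\ \forall l\}$, and let $\mathcal A^*_{1;P}$ be the union of $\mathcal{A}^*_{1;P}(\{q_k\})$ over all finite alphabets $\mathcal Z_{J+1},\dots,\mathcal Z_M$ and all test channels $\{q_k\}$. *)

theory Defs
  imports "HOL-Analysis.Analysis" "HOL-Library.Function_Algebras" "HOL-Combinatorics.Permutations"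
begin

instantiation "fun" :: (type, real_vector) real_vector
begin
definition scaleR_fun :: "real \<Rightarrow> ('a \<Rightarrow> 'b) \<Rightarrow> 'a \<Rightarrow> 'b"
  where "scaleR_fun r f = (\<lambda>x. r *\<^sub>R f x)"
instance by standard (auto simp: scaleR_fun_def fun_eq_iff algebra_simps)
end

definition prb :: "'o set \<Rightarrow> ('o \<Rightarrow> real) \<Rightarrow> ('o \<Rightarrow> bool) \<Rightarrow> real" where
  "prb \<Omega> w E = (\<Sum>\<omega>\<in>{\<omega>\<in>\<Omega>. E \<omega>}. w \<omega>)"

definition cmi :: "'o set \<Rightarrow> ('o \<Rightarrow> real) \<Rightarrow> ('o \<Rightarrow> 'a) \<Rightarrow> ('o \<Rightarrow> 'b) \<Rightarrow> ('o \<Rightarrow> 'c) \<Rightarrow> real" where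
  "cmi \<Omega> w A B C =
     (\<Sum>t\<in>(\<lambda>\<omega>. (A \<omega>, B \<omega>, C \<omega>)) ` \<Omega>.
        (case t of (a, b, c) \<Rightarrow>
          (let pabc = prb \<Omega> w (\<lambda>\<omega>. A \<omega> = a \<and> B \<omega> = b \<and> C \<omega> = c);
               pac = prb \<Omega> w (\<lambda>\<omega>. A \<omega> = a \<and> C \<omega> = c);
               pbc = prb \<Omega> w (\<lambda>\<omega>. B \<omega> = b \<and> C \<omega> = c);
               pc = prb \<Omega> w (\<lambda>\<omega>. C \<omega> = c)
           in if pabc = 0 then 0 else pabc * log 2 (pabc * pc / (pac * pbc)))))"

definition expect :: "'o set \<Rightarrow> ('o \<Rightarrow> real) \<Rightarrow> ('o \<Rightarrow> real) \<Rightarrow> real" where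
  "expect \<Omega> w f = (\<Sum>\<omega>\<in>\<Omega>. w \<omega> * f \<omega>)"

text \<open>An outcome is (x, s, v, z): x the source tuple (on {1..M}), s the side information,
  v the remote source, z the test-channel outputs (on {J+1..M}).
  Alphabets of the Z_k (k > J) are finite subsets of nat (every finite alphabet is
  in bijection with one). Z_m for m \<le> J is X_m (tagged Inl), for m > J it is z m (tagged Inr).\<close>

type_synonym ('x, 's, 'v) outcome = "(nat \<Rightarrow> 'x) \<times> 's \<times> 'v \<times> (nat \<Rightarrow> nat)"

definition outcomes ::
  "nat \<Rightarrow> nat \<Rightarrow> (nat \<Rightarrow> 'x set) \<Rightarrow> 's set \<Rightarrow> 'v set \<Rightarrow> (nat \<Rightarrow> nat set)
    \<Rightarrow> ('x, 's, 'v) outcome set" where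
  "outcomes M J \<X> \<S> \<V> \<Z> = (PiE {1..M} \<X>) \<times> \<S> \<times> \<V> \<times> (PiE {J+1..M} \<Z>)"

definition weight ::
  "nat \<Rightarrow> nat \<Rightarrow> ((nat \<Rightarrow> 'x) \<Rightarrow> 's \<Rightarrow> 'v \<Rightarrow> real) \<Rightarrow> (nat \<Rightarrow> 'x \<Rightarrow> nat \<Rightarrow> real)
    \<Rightarrow> ('x, 's, 'v) outcome \<Rightarrow> real" where
  "weight M J p q \<omega> = (case \<omega> of (x, s, v, z) \<Rightarrow> p x s v * (\<Prod>k\<in>{J+1..M}. q k (x k) (z k)))"

definition Xrv :: "nat \<Rightarrow> ('x, 's, 'v) outcome \<Rightarrow> 'x" where
  "Xrv m \<omega> = fst \<omega> m"

definition Srv :: "('x, 's, 'v) outcome \<Rightarrow> 's" where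
  "Srv \<omega> = fst (snd \<omega>)"

definition Vrv :: "('x, 's, 'v) outcome \<Rightarrow> 'v" where
  "Vrv \<omega> = fst (snd (snd \<omega>))"

definition Zrv :: "nat \<Rightarrow> nat \<Rightarrow> ('x, 's, 'v) outcome \<Rightarrow> 'x + nat" where
  "Zrv J m \<omega> = (if m \<le> J then Inl (fst \<omega> m) else Inr (snd (snd (snd \<omega>)) m))"

definition Zset :: "nat \<Rightarrow> nat set \<Rightarrow> ('x, 's, 'v) outcome \<Rightarrow> nat \<Rightarrow> ('x + nat)" where
  "Zset J A \<omega> = restrict (\<lambda>m. Zrv J m \<omega>) A"

definition test_channels ::
  "nat \<Rightarrow> nat \<Rightarrow> (nat \<Rightarrow> 'x set) \<Rightarrow> (nat \<Rightarrow> nat set) \<Rightarrow> (nat \<Rightarrow> 'x \<Rightarrow> nat \<Rightarrow> real) \<Rightarrow> bool" where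
  "test_channels M J \<X> \<Z> q \<longleftrightarrow>
     (\<forall>k\<in>{J+1..M}. finite (\<Z> k) \<and>
        (\<forall>x\<in>\<X> k. (\<forall>z\<in>\<Z> k. 0 \<le> q k x z) \<and> (\<Sum>z\<in>\<Z> k. q k x z) = 1))"

definition RP ::
  "nat \<Rightarrow> nat \<Rightarrow> (nat \<Rightarrow> 'x set) \<Rightarrow> 's set \<Rightarrow> 'v set \<Rightarrow> ((nat \<Rightarrow> 'x) \<Rightarrow> 's \<Rightarrow> 'v \<Rightarrow> real)
    \<Rightarrow> (nat \<Rightarrow> nat) \<Rightarrow> (nat \<Rightarrow> nat set) \<Rightarrow> (nat \<Rightarrow> 'x \<Rightarrow> nat \<Rightarrow> real) \<Rightarrow> nat \<Rightarrow> real" where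
  "RP M J \<X> \<S> \<V> p P \<Z> q m =
     (if m \<in> {1..M} then
        (let i = inv_into {1..M} P m in
         cmi (outcomes M J \<X> \<S> \<V> \<Z>) (weight M J p q)
             (Xrv m) (Zrv J m) (\<lambda>\<omega>. (Zset J (P ` {1..<i}) \<omega>, Srv \<omega>)))
      else 0)"

definition DP ::
  "nat \<Rightarrow> nat \<Rightarrow> nat \<Rightarrow> (nat \<Rightarrow> 'x set) \<Rightarrow> 's set \<Rightarrow> 'v set \<Rightarrow> ((nat \<Rightarrow> 'x) \<Rightarrow> 's \<Rightarrow> 'v \<Rightarrow> real)
    \<Rightarrow> (nat \<Rightarrow> 'r set) \<Rightarrow> (nat \<Rightarrow> 'v \<Rightarrow> 'r \<Rightarrow> real)
    \<Rightarrow> (nat \<Rightarrow> nat set) \<Rightarrow> (nat \<Rightarrow> 'x \<Rightarrow> nat \<Rightarrow> real) \<Rightarrow> nat \<Rightarrow> real" where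
  "DP M J L \<X> \<S> \<V> p Vh d \<Z> q l =
     (if l \<in> {1..L} then
        Min {expect (outcomes M J \<X> \<S> \<V> \<Z>) (weight M J p q)
               (\<lambda>\<omega>. d l (Vrv \<omega>) (\<psi> (Zset J {1..M} \<omega>, Srv \<omega>))) |
             \<psi> :: ((nat \<Rightarrow> 'x + nat) \<times> 's \<Rightarrow> 'r). \<forall>a. \<psi> a \<in> Vh l}
      else 0)"

text \<open>The region A*_{1;P}(q): points (R, D) with R \<in> R^M, D \<in> R^L, embedded as
  functions nat \<Rightarrow> real vanishing outside {1..M} resp. {1..L}.\<close>
definition regionq ::
  "nat \<Rightarrow> nat \<Rightarrow> nat \<Rightarrow> (nat \<Rightarrow> 'x set) \<Rightarrow> 's set \<Rightarrow> 'v set \<Rightarrow> ((nat \<Rightarrow> 'x) \<Rightarrow> 's \<Rightarrow> 'v \<Rightarrow> real)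
    \<Rightarrow> (nat \<Rightarrow> 'r set) \<Rightarrow> (nat \<Rightarrow> 'v \<Rightarrow> 'r \<Rightarrow> real) \<Rightarrow> (nat \<Rightarrow> nat)
    \<Rightarrow> (nat \<Rightarrow> nat set) \<Rightarrow> (nat \<Rightarrow> 'x \<Rightarrow> nat \<Rightarrow> real) \<Rightarrow> ((nat \<Rightarrow> real) \<times> (nat \<Rightarrow> real)) set" where
  "regionq M J L \<X> \<S> \<V> p Vh d P \<Z> q =
     {(R, D). (\<forall>i. i \<notin> {1..M} \<longrightarrow> R i = 0) \<and> (\<forall>l. l \<notin> {1..L} \<longrightarrow> D l = 0) \<and>
              (\<forall>i\<in>{1..M}. R i \<ge> RP M J \<X> \<S> \<V> p P \<Z> q i) \<and>
              (\<forall>l\<in>{1..L}. D l \<ge> DP M J L \<X> \<S> \<V> p Vh d \<Z> q l)}"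

definition region ::
  "nat \<Rightarrow> nat \<Rightarrow> nat \<Rightarrow> (nat \<Rightarrow> 'x set) \<Rightarrow> 's set \<Rightarrow> 'v set \<Rightarrow> ((nat \<Rightarrow> 'x) \<Rightarrow> 's \<Rightarrow> 'v \<Rightarrow> real)
    \<Rightarrow> (nat \<Rightarrow> 'r set) \<Rightarrow> (nat \<Rightarrow> 'v \<Rightarrow> 'r \<Rightarrow> real) \<Rightarrow> (nat \<Rightarrow> nat)
    \<Rightarrow> ((nat \<Rightarrow> real) \<times> (nat \<Rightarrow> real)) set" where
  "region M J L \<X> \<S> \<V> p Vh d P =
     (\<Union>{regionq M J L \<X> \<S> \<V> p Vh d P \<Z> q | \<Z> q. test_channels M J \<X> \<Z> q})"

end

theory Submission
  imports Defs
begin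


lemma lin_dep:
  fixes f :: "'x \<Rightarrow> 'z \<Rightarrow> real"
  assumes "finite X" "finite Z" "card Z > card X"
  shows "\<exists>c. (\<exists>z\<in>Z. c z \<noteq> 0) \<and> (\<forall>x\<in>X. (\<Sum>z\<in>Z. c z * f x z) = 0)"
  using assms
proof (induction X arbitrary: Z f rule: finite_induct)
  case empty
  then obtain z where "z \<in> Z" by fastforce
  then show ?case by (intro exI[of _ "\<lambda>_. 1"]) auto
next
  case (insert x0 X)
  show ?case
  proof (cases "\<forall>z\<in>Z. f x0 z = 0")
    case True
    from insert.IH[of Z f] insert.prems insert.hyps obtain c where
      "\<exists>z\<in>Z. c z \<noteq> 0" "\<forall>x\<in>X. (\<Sum>z\<in>Z. c z * f x z) = 0" by auto
    then show ?thesis using True by (intro exI[of _ c]) auto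
  next
    case False
    then obtain z0 where z0: "z0 \<in> Z" "f x0 z0 \<noteq> 0" by auto
    define Z' where "Z' = Z - {z0}"
    define g where "g x z = f x z - f x z0 * f x0 z / f x0 z0" for x z
    have cZ': "card Z' > card X" using insert.prems insert.hyps z0 by (simp add: Z'_def)
    from insert.IH[of Z' g] cZ' insert.prems obtain c' where
      c': "\<exists>z\<in>Z'. c' z \<noteq> 0" "\<forall>x\<in>X. (\<Sum>z\<in>Z'. c' z * g x z) = 0" by (auto simp: Z'_def)
    define c where "c = c'(z0 := - (\<Sum>z\<in>Z'. c' z * f x0 z) / f x0 z0)"
    have sumZ: "(\<Sum>z\<in>Z. c z * f x z) = c z0 * f x z0 + (\<Sum>z\<in>Z'. c' z * f x z)" for x
    proof -
      have "(\<Sum>z\<in>Z. c z * f x z) = c z0 * f x z0 + (\<Sum>z\<in>Z'. c z * f x z)"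
        unfolding Z'_def using z0 insert.prems by (simp add: sum.remove)
      also have "(\<Sum>z\<in>Z'. c z * f x z) = (\<Sum>z\<in>Z'. c' z * f x z)"
        by (rule sum.cong) (auto simp: c_def Z'_def)
      finally show ?thesis .
    qed
    have "\<exists>z\<in>Z. c z \<noteq> 0" using c' by (auto simp: c_def Z'_def)
    moreover have "(\<Sum>z\<in>Z. c z * f x z) = 0" if "x \<in> insert x0 X" for x
    proof (cases "x = x0")
      case True
      have "(\<Sum>z\<in>Z. c z * f x z) = c z0 * f x0 z0 + (\<Sum>z\<in>Z'. c' z * f x0 z)"
        using sumZ True by simp
      also have "\<dots> = 0" using z0 by (simp add: c_def)
      finally show ?thesis .
    next
      case False
      with that have x: "x \<in> X" by auto
      have "0 = (\<Sum>z\<in>Z'. c' z * g x z)" using c' x by auto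
      also have "\<dots> = (\<Sum>z\<in>Z'. c' z * f x z) - f x z0 / f x0 z0 * (\<Sum>z\<in>Z'. c' z * f x0 z)"
        by (simp add: g_def algebra_simps sum_subtractf sum_distrib_left)
      also have "\<dots> = c z0 * f x z0 + (\<Sum>z\<in>Z'. c' z * f x z)"
        using z0 by (simp add: c_def field_simps)
      also have "\<dots> = (\<Sum>z\<in>Z. c z * f x z)" by (rule sumZ[symmetric])
      finally show ?thesis by simp
    qed
    ultimately show ?thesis by blast
  qed
qed




definition cmiterm :: "'o set \<Rightarrow> ('o \<Rightarrow> real) \<Rightarrow> ('o \<Rightarrow> 'a) \<Rightarrow> ('o \<Rightarrow> 'b) \<Rightarrow> ('o \<Rightarrow> 'c) \<Rightarrow> 'a \<times> 'b \<times> 'c \<Rightarrow> real" where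
  "cmiterm \<Omega> w A B C t = (case t of (a, b, c) \<Rightarrow>
          (let pabc = prb \<Omega> w (\<lambda>\<omega>. A \<omega> = a \<and> B \<omega> = b \<and> C \<omega> = c);
               pac = prb \<Omega> w (\<lambda>\<omega>. A \<omega> = a \<and> C \<omega> = c);
               pbc = prb \<Omega> w (\<lambda>\<omega>. B \<omega> = b \<and> C \<omega> = c);
               pc = prb \<Omega> w (\<lambda>\<omega>. C \<omega> = c)
           in if pabc = 0 then 0 else pabc * log 2 (pabc * pc / (pac * pbc))))"

lemma cmi_term: "cmi \<Omega> w A B C = (\<Sum>t\<in>(\<lambda>\<omega>. (A \<omega>, B \<omega>, C \<omega>)) ` \<Omega>. cmiterm \<Omega> w A B C t)"
  unfolding cmi_def cmiterm_def ..

lemma cmi_scale: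
  assumes "\<And>a b c. (a, b, c) \<in> (\<lambda>\<omega>. (A \<omega>, B \<omega>, C \<omega>)) ` \<Omega> \<Longrightarrow>
     prb \<Omega> w' (\<lambda>\<omega>. A \<omega> = a \<and> B \<omega> = b \<and> C \<omega> = c) = \<alpha> (a,b,c) * prb \<Omega> w (\<lambda>\<omega>. A \<omega> = a \<and> B \<omega> = b \<and> C \<omega> = c) \<and>
     prb \<Omega> w' (\<lambda>\<omega>. B \<omega> = b \<and> C \<omega> = c) = \<alpha> (a,b,c) * prb \<Omega> w (\<lambda>\<omega>. B \<omega> = b \<and> C \<omega> = c) \<and>
     prb \<Omega> w' (\<lambda>\<omega>. A \<omega> = a \<and> C \<omega> = c) = \<beta> (a,b,c) * prb \<Omega> w (\<lambda>\<omega>. A \<omega> = a \<and> C \<omega> = c) \<and>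
     prb \<Omega> w' (\<lambda>\<omega>. C \<omega> = c) = \<beta> (a,b,c) * prb \<Omega> w (\<lambda>\<omega>. C \<omega> = c) \<and>
     (\<alpha> (a,b,c) = 0 \<or> \<beta> (a,b,c) \<noteq> 0)"
  shows "cmi \<Omega> w' A B C = (\<Sum>t\<in>(\<lambda>\<omega>. (A \<omega>, B \<omega>, C \<omega>)) ` \<Omega>. \<alpha> t * cmiterm \<Omega> w A B C t)"
  unfolding cmi_term
proof (rule sum.cong[OF refl])
  fix t assume t: "t \<in> (\<lambda>\<omega>. (A \<omega>, B \<omega>, C \<omega>)) ` \<Omega>"
  obtain a b c where tt: "t = (a, b, c)" by (cases t) auto
  define x1 where "x1 = prb \<Omega> w (\<lambda>\<omega>. A \<omega> = a \<and> B \<omega> = b \<and> C \<omega> = c)"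
  define x2 where "x2 = prb \<Omega> w (\<lambda>\<omega>. A \<omega> = a \<and> C \<omega> = c)"
  define x3 where "x3 = prb \<Omega> w (\<lambda>\<omega>. B \<omega> = b \<and> C \<omega> = c)"
  define x4 where "x4 = prb \<Omega> w (\<lambda>\<omega>. C \<omega> = c)"
  from assms[of a b c] t tt have h:
    "prb \<Omega> w' (\<lambda>\<omega>. A \<omega> = a \<and> B \<omega> = b \<and> C \<omega> = c) = \<alpha> t * x1"
    "prb \<Omega> w' (\<lambda>\<omega>. B \<omega> = b \<and> C \<omega> = c) = \<alpha> t * x3"
    "prb \<Omega> w' (\<lambda>\<omega>. A \<omega> = a \<and> C \<omega> = c) = \<beta> t * x2"
    "prb \<Omega> w' (\<lambda>\<omega>. C \<omega> = c) = \<beta> t * x4"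
    "\<alpha> t = 0 \<or> \<beta> t \<noteq> 0"
    by (auto simp: x1_def x2_def x3_def x4_def)
  have e1: "cmiterm \<Omega> w' A B C t = (if \<alpha> t * x1 = 0 then 0 else \<alpha> t * x1 * log 2 (\<alpha> t * x1 * (\<beta> t * x4) / (\<beta> t * x2 * (\<alpha> t * x3))))"
    unfolding cmiterm_def tt Let_def using h by (simp add: tt)
  have e2: "cmiterm \<Omega> w A B C t = (if x1 = 0 then 0 else x1 * log 2 (x1 * x4 / (x2 * x3)))"
    unfolding cmiterm_def tt Let_def x1_def x2_def x3_def x4_def by simp
  show "cmiterm \<Omega> w' A B C t = \<alpha> t * cmiterm \<Omega> w A B C t"
  proof (cases "\<alpha> t = 0")
    case True thus ?thesis by (simp add: e1)
  next
    case False
    with h(5) have "\<beta> t \<noteq> 0" by auto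
    then have "\<alpha> t * x1 * (\<beta> t * x4) / (\<beta> t * x2 * (\<alpha> t * x3)) = x1 * x4 / (x2 * x3)"
      using False by (simp add: field_simps)
    then show ?thesis using False by (simp add: e1 e2)
  qed
qed

lemma prb_mono:
  assumes "\<Omega>' \<subseteq> \<Omega>" "finite \<Omega>" "\<forall>\<omega>\<in>\<Omega> - \<Omega>'. w \<omega> = 0"
  shows "prb \<Omega> w E = prb \<Omega>' w E"
  unfolding prb_def
  by (rule sum.mono_neutral_right) (use assms in \<open>auto\<close>)

lemma expect_mono:
  assumes "\<Omega>' \<subseteq> \<Omega>" "finite \<Omega>" "\<forall>\<omega>\<in>\<Omega> - \<Omega>'. w \<omega> = 0"
  shows "expect \<Omega> w f = expect \<Omega>' w f"
  unfolding expect_def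
  by (rule sum.mono_neutral_right) (use assms in \<open>auto\<close>)

lemma cmi_mono:
  assumes "\<Omega>' \<subseteq> \<Omega>" "finite \<Omega>" "\<forall>\<omega>\<in>\<Omega> - \<Omega>'. w \<omega> = 0"
  shows "cmi \<Omega> w A B C = cmi \<Omega>' w A B C"
proof -
  have "cmi \<Omega> w A B C = (\<Sum>t\<in>(\<lambda>\<omega>. (A \<omega>, B \<omega>, C \<omega>)) ` \<Omega>. cmiterm \<Omega>' w A B C t)"
    unfolding cmi_term cmiterm_def using prb_mono[OF assms] by simp
  also have "\<dots> = (\<Sum>t\<in>(\<lambda>\<omega>. (A \<omega>, B \<omega>, C \<omega>)) ` \<Omega>'. cmiterm \<Omega>' w A B C t)"
  proof -
    have fin: "finite ((\<lambda>\<omega>. (A \<omega>, B \<omega>, C \<omega>)) ` \<Omega>)" using assms by auto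
    have sub: "(\<lambda>\<omega>. (A \<omega>, B \<omega>, C \<omega>)) ` \<Omega>' \<subseteq> (\<lambda>\<omega>. (A \<omega>, B \<omega>, C \<omega>)) ` \<Omega>" using assms by auto
    have zero: "\<forall>t\<in>(\<lambda>\<omega>. (A \<omega>, B \<omega>, C \<omega>)) ` \<Omega> - (\<lambda>\<omega>. (A \<omega>, B \<omega>, C \<omega>)) ` \<Omega>'. cmiterm \<Omega>' w A B C t = 0"
    proof
      fix t assume t: "t \<in> (\<lambda>\<omega>. (A \<omega>, B \<omega>, C \<omega>)) ` \<Omega> - (\<lambda>\<omega>. (A \<omega>, B \<omega>, C \<omega>)) ` \<Omega>'"
      obtain a b c where tt: "t = (a, b, c)" by (cases t) auto
      have "{\<omega> \<in> \<Omega>'. A \<omega> = a \<and> B \<omega> = b \<and> C \<omega> = c} = {}" using t tt by (auto simp: image_iff)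
      then have "prb \<Omega>' w (\<lambda>\<omega>. A \<omega> = a \<and> B \<omega> = b \<and> C \<omega> = c) = 0" unfolding prb_def by (metis sum.empty)
      then show "cmiterm \<Omega>' w A B C t = 0" unfolding cmiterm_def tt by simp
    qed
    show ?thesis by (rule sum.mono_neutral_right[OF fin sub zero])
  qed
  finally show ?thesis unfolding cmi_term .
qed




lemma prb_alt: "finite \<Omega> \<Longrightarrow> prb \<Omega> w E = (\<Sum>\<omega>\<in>\<Omega>. if E \<omega> then w \<omega> else 0)"
  unfolding prb_def by (simp add: sum.inter_filter)

lemma inner_zero:
  fixes F :: "(nat \<Rightarrow> nat) \<Rightarrow> real"
  assumes k: "k \<in> D" and inv: "\<And>z y. F (z(k := y)) = F z"
    and fin: "finite D"
    and sz: "(\<Sum>y\<in>Z k. Q k y * c y) = 0"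
  shows "(\<Sum>z\<in>PiE D Z. F z * (\<Prod>j\<in>D. Q j (z j)) * c (z k)) = 0"
proof -
  define D' where "D' = D - {k}"
  have D: "D = insert k D'" "k \<notin> D'" using k by (auto simp: D'_def)
  have "(\<Sum>z\<in>PiE D Z. F z * (\<Prod>j\<in>D. Q j (z j)) * c (z k))
      = (\<Sum>(y,g)\<in>Z k \<times> PiE D' Z. F (g(k:=y)) * (\<Prod>j\<in>D. Q j ((g(k:=y)) j)) * c y)"
    unfolding D(1) PiE_insert_eq
    by (subst sum.reindex[OF inj_combinator[OF D(2)]]) (simp add: case_prod_beta)
  also have "\<dots> = (\<Sum>g\<in>PiE D' Z. \<Sum>y\<in>Z k. F (g(k:=y)) * (\<Prod>j\<in>D. Q j ((g(k:=y)) j)) * c y)"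
    by (subst sum.cartesian_product[symmetric]) (subst sum.swap, simp)
  also have "\<dots> = (\<Sum>g\<in>PiE D' Z. F g * (\<Prod>j\<in>D'. Q j (g j)) * (\<Sum>y\<in>Z k. Q k y * c y))"
  proof (rule sum.cong[OF refl])
    fix g assume g: "g \<in> PiE D' Z"
    have "(\<Prod>j\<in>D. Q j ((g(k:=y)) j)) = Q k y * (\<Prod>j\<in>D'. Q j (g j))" for y
    proof -
      have "(\<Prod>j\<in>D'. Q j ((g(k:=y)) j)) = (\<Prod>j\<in>D'. Q j (g j))"
        by (rule prod.cong) (use D(2) in auto)
      moreover have "finite D'" using fin D by auto
      ultimately show ?thesis unfolding D(1) using D(2) by simp
    qed
    then show "(\<Sum>y\<in>Z k. F (g(k:=y)) * (\<Prod>j\<in>D. Q j ((g(k:=y)) j)) * c y) = F g * (\<Prod>j\<in>D'. Q j (g j)) * (\<Sum>y\<in>Z k. Q k y * c y)"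
      by (simp add: inv sum_distrib_left mult_ac)
  qed
  also have "\<dots> = 0" using sz by simp
  finally show ?thesis .
qed




lemma sum_outcomes:
  "(\<Sum>\<omega>\<in>outcomes M J X S V Z. f \<omega>) =
   (\<Sum>x\<in>PiE {1..M} X. \<Sum>s\<in>S. \<Sum>v\<in>V. \<Sum>z\<in>PiE {J+1..M} Z. f (x,s,v,z))"
  unfolding outcomes_def by (simp add: sum.cartesian_product)

lemma F2:
  assumes k: "k \<in> {J+1..M}" and sq: "\<forall>x\<in>X k. (\<Sum>y\<in>Z k. q k x y * c y) = 0"
    and inv: "\<forall>x s v z y. E (x,s,v,z(k:=y)) = E (x,s,v,z)"
    and fin: "finite (outcomes M J X S V Z)"
  shows "prb (outcomes M J X S V Z) (\<lambda>\<omega>. weight M J p q \<omega> * c (snd(snd(snd \<omega>)) k)) E = 0"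
proof -
  have "prb (outcomes M J X S V Z) (\<lambda>\<omega>. weight M J p q \<omega> * c (snd(snd(snd \<omega>)) k)) E
    = (\<Sum>x\<in>PiE {1..M} X. \<Sum>s\<in>S. \<Sum>v\<in>V. \<Sum>z\<in>PiE {J+1..M} Z.
         (if E (x,s,v,z) then p x s v else 0) * (\<Prod>j\<in>{J+1..M}. q j (x j) (z j)) * c (z k))"
    unfolding prb_alt[OF fin] sum_outcomes weight_def by (intro sum.cong refl) simp
  also have "\<dots> = 0"
  proof -
   have inner: "(\<Sum>z\<in>PiE {J+1..M} Z.
         (if E (x,s,v,z) then p x s v else 0) * (\<Prod>j\<in>{J+1..M}. q j (x j) (z j)) * c (z k)) = 0"
     if x: "x \<in> PiE {1..M} X" for x s v
   proof -
    have xk: "x k \<in> X k" using x k by auto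
    define F where "F z = (if E (x,s,v,z) then p x s v else 0)" for z
    have "(\<Sum>z\<in>PiE {J+1..M} Z. F z * (\<Prod>j\<in>{J+1..M}. q j (x j) (z j)) * c (z k)) = 0"
    proof (rule inner_zero)
      show "k \<in> {J+1..M}" using k .
      show "F (z(k := y)) = F z" for z y using inv by (simp add: F_def)
      show "finite {J+1..M}" by simp
      show "(\<Sum>y\<in>Z k. q k (x k) y * c y) = 0" using sq xk by auto
    qed
    then show "(\<Sum>z\<in>PiE {J+1..M} Z.
         (if E (x,s,v,z) then p x s v else 0) * (\<Prod>j\<in>{J+1..M}. q j (x j) (z j)) * c (z k)) = 0"
      by (simp add: F_def)
   qed
   show ?thesis by (rule sum.neutral) (use inner in simp)
  qed
  finally show ?thesis .
qed

lemma weight_mod: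
  assumes k: "k \<in> {J+1..M}"
  shows "weight M J p (q(k := \<lambda>x y. q k x y * (1 + t * c y))) \<omega>
       = weight M J p q \<omega> * (1 + t * c (snd(snd(snd \<omega>)) k))"
proof -
  obtain x s v z where w: "\<omega> = (x,s,v,z)" by (cases \<omega>) auto
  have "(\<Prod>j\<in>{J+1..M}. (q(k := \<lambda>x y. q k x y * (1 + t * c y))) j (x j) (z j))
     = (q k (x k) (z k) * (1 + t * c (z k))) * (\<Prod>j\<in>{J+1..M} - {k}. q j (x j) (z j))"
    using k by (simp add: prod.remove)
  also have "\<dots> = (\<Prod>j\<in>{J+1..M}. q j (x j) (z j)) * (1 + t * c (z k))"
    using k by (simp add: prod.remove)
  finally show ?thesis unfolding w weight_def by simp
qed

lemma prb_mod:
  assumes k: "k \<in> {J+1..M}" and fin: "finite \<Omega>"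
  shows "prb \<Omega> (weight M J p (q(k := \<lambda>x y. q k x y * (1 + t * c y)))) E
     = prb \<Omega> (weight M J p q) E + t * prb \<Omega> (\<lambda>\<omega>. weight M J p q \<omega> * c (snd(snd(snd \<omega>)) k)) E"
  unfolding prb_def weight_mod[OF k] using fin
  by (simp add: algebra_simps sum.distrib sum_distrib_left)

lemma F1:
  assumes "\<forall>\<omega>\<in>\<Omega>. E \<omega> \<longrightarrow> snd(snd(snd \<omega>)) k = y"
  shows "prb \<Omega> (\<lambda>\<omega>. w \<omega> * c (snd(snd(snd \<omega>)) k)) E = c y * prb \<Omega> w E"
  unfolding prb_def using assms by (simp add: sum_distrib_left mult_ac)




lemma Zrv_upd: "j \<noteq> k \<Longrightarrow> Zrv J j (x,s,v,z(k:=y)) = Zrv J j (x,s,v,z)"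
  by (simp add: Zrv_def)

lemma Zset_upd: "k \<notin> G \<Longrightarrow> Zset J G (x,s,v,z(k:=y)) = Zset J G (x,s,v,z)"
  unfolding Zset_def by (rule restrict_ext) (auto simp: Zrv_def)

definition qt :: "nat \<Rightarrow> (nat \<Rightarrow> real) \<Rightarrow> real \<Rightarrow> (nat \<Rightarrow> 'x \<Rightarrow> nat \<Rightarrow> real) \<Rightarrow> (nat \<Rightarrow> 'x \<Rightarrow> nat \<Rightarrow> real)" where
  "qt k c t q = q(k := \<lambda>x y. q k x y * (1 + t * c y))"

lemma cmi_mod:
  fixes G :: "nat set" and \<X> :: "nat \<Rightarrow> 'x set" and \<S> :: "'s set" and \<V> :: "'v set" and \<Z>
  assumes k: "k \<in> {J+1..M}" and sq: "\<forall>x\<in>\<X> k. (\<Sum>y\<in>\<Z> k. q k x y * c y) = 0"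
    and fin: "finite (outcomes M J \<X> \<S> \<V> \<Z>)"
  shows "\<exists>\<gamma>. \<forall>t. cmi (outcomes M J \<X> \<S> \<V> \<Z>) (weight M J p (qt k c t q)) (Xrv m) (Zrv J m) (\<lambda>\<omega>. (Zset J G \<omega>, Srv \<omega>))
     = (\<Sum>tup\<in>(\<lambda>\<omega>. (Xrv m \<omega>, Zrv J m \<omega>, (Zset J G \<omega>, Srv \<omega>))) ` outcomes M J \<X> \<S> \<V> \<Z>.
          (1 + t * \<gamma> tup) * cmiterm (outcomes M J \<X> \<S> \<V> \<Z>) (weight M J p q) (Xrv m) (Zrv J m) (\<lambda>\<omega>. (Zset J G \<omega>, Srv \<omega>)) tup)"
proof -
  define \<Omega> where "\<Omega> = outcomes M J \<X> \<S> \<V> \<Z>"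
  define wc where "wc = (\<lambda>\<omega>. weight M J p q \<omega> * c (snd(snd(snd \<omega>)) k))"
  have pm: "prb \<Omega> (weight M J p (qt k c t q)) E = prb \<Omega> (weight M J p q) E + t * prb \<Omega> wc E" for t E
    unfolding qt_def wc_def \<Omega>_def by (rule prb_mod[OF k fin])
  have f2: "prb \<Omega> wc E = 0" if "\<forall>x s v z y. E (x,s,v,z(k:=y)) = E (x,s,v,z)" for E
    unfolding wc_def \<Omega>_def by (rule F2[where E=E and k=k and q=q and c=c and Z=\<Z> and X=\<X> and M=M and J=J and S=\<S> and V=\<V> and p=p, OF k sq that fin])
  have f1: "prb \<Omega> wc E = c y * prb \<Omega> (weight M J p q) E" if "\<forall>\<omega>\<in>\<Omega>. E \<omega> \<longrightarrow> snd(snd(snd \<omega>)) k = y" for E y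
    unfolding wc_def by (rule F1[OF that])
  have kJ: "\<not> k \<le> J" using k by auto
  consider (a) "k \<in> G" | (b) "k \<notin> G" "k = m" | (c) "k \<notin> G" "k \<noteq> m" by blast
  then show ?thesis
  proof cases
    case a
    define \<gamma> where "\<gamma> = (\<lambda>(tup :: 'x \<times> ('x + nat) \<times> (nat \<Rightarrow> 'x + nat) \<times> 's). c (projr (fst (snd (snd tup)) k)))"
    show ?thesis
    proof (intro exI allI)
      fix t
      show "cmi (outcomes M J \<X> \<S> \<V> \<Z>) (weight M J p (qt k c t q)) (Xrv m) (Zrv J m) (\<lambda>\<omega>. (Zset J G \<omega>, Srv \<omega>))
        = (\<Sum>tup\<in>(\<lambda>\<omega>. (Xrv m \<omega>, Zrv J m \<omega>, (Zset J G \<omega>, Srv \<omega>))) ` outcomes M J \<X> \<S> \<V> \<Z>.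
          (1 + t * \<gamma> tup) * cmiterm (outcomes M J \<X> \<S> \<V> \<Z>) (weight M J p q) (Xrv m) (Zrv J m) (\<lambda>\<omega>. (Zset J G \<omega>, Srv \<omega>)) tup)"
        unfolding \<Omega>_def[symmetric]
      proof (rule cmi_scale[where \<beta>="\<lambda>tup. 1 + t * \<gamma> tup"])
        fix a b cc
        assume "(a, b, cc) \<in> (\<lambda>\<omega>. (Xrv m \<omega>, Zrv J m \<omega>, Zset J G \<omega>, Srv \<omega>)) ` \<Omega>"
        have ev: "\<forall>\<omega>\<in>\<Omega>. E \<omega> \<longrightarrow> snd(snd(snd \<omega>)) k = projr (fst cc k)"
          if "\<And>\<omega>. E \<omega> \<Longrightarrow> (Zset J G \<omega>, Srv \<omega>) = cc" for E
        proof (intro ballI impI)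
          fix \<omega> assume "E \<omega>"
          then have "(Zset J G \<omega>, Srv \<omega>) = cc" by (rule that)
          then have "fst cc k = Zset J G \<omega> k" by auto
          then show "snd(snd(snd \<omega>)) k = projr (fst cc k)" using a kJ by (simp add: Zset_def Zrv_def)
        qed
        show "prb \<Omega> (weight M J p (qt k c t q)) (\<lambda>\<omega>. Xrv m \<omega> = a \<and> Zrv J m \<omega> = b \<and> (Zset J G \<omega>, Srv \<omega>) = cc) =
          (1 + t * \<gamma> (a, b, cc)) * prb \<Omega> (weight M J p q) (\<lambda>\<omega>. Xrv m \<omega> = a \<and> Zrv J m \<omega> = b \<and> (Zset J G \<omega>, Srv \<omega>) = cc) \<and>
          prb \<Omega> (weight M J p (qt k c t q)) (\<lambda>\<omega>. Zrv J m \<omega> = b \<and> (Zset J G \<omega>, Srv \<omega>) = cc) =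
          (1 + t * \<gamma> (a, b, cc)) * prb \<Omega> (weight M J p q) (\<lambda>\<omega>. Zrv J m \<omega> = b \<and> (Zset J G \<omega>, Srv \<omega>) = cc) \<and>
          prb \<Omega> (weight M J p (qt k c t q)) (\<lambda>\<omega>. Xrv m \<omega> = a \<and> (Zset J G \<omega>, Srv \<omega>) = cc) =
          (1 + t * \<gamma> (a, b, cc)) * prb \<Omega> (weight M J p q) (\<lambda>\<omega>. Xrv m \<omega> = a \<and> (Zset J G \<omega>, Srv \<omega>) = cc) \<and>
          prb \<Omega> (weight M J p (qt k c t q)) (\<lambda>\<omega>. (Zset J G \<omega>, Srv \<omega>) = cc) =
          (1 + t * \<gamma> (a, b, cc)) * prb \<Omega> (weight M J p q) (\<lambda>\<omega>. (Zset J G \<omega>, Srv \<omega>) = cc) \<and>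
          (1 + t * \<gamma> (a, b, cc) = 0 \<or> 1 + t * \<gamma> (a, b, cc) \<noteq> 0)"
          unfolding pm
          by (subst f1[OF ev], simp, simp add: \<gamma>_def algebra_simps)+
      qed
    qed
  next
    case b
    define \<gamma> where "\<gamma> = (\<lambda>(tup :: 'x \<times> ('x + nat) \<times> (nat \<Rightarrow> 'x + nat) \<times> 's). c (projr (fst (snd tup))))"
    show ?thesis
    proof (intro exI allI)
      fix t
      show "cmi (outcomes M J \<X> \<S> \<V> \<Z>) (weight M J p (qt k c t q)) (Xrv m) (Zrv J m) (\<lambda>\<omega>. (Zset J G \<omega>, Srv \<omega>))
        = (\<Sum>tup\<in>(\<lambda>\<omega>. (Xrv m \<omega>, Zrv J m \<omega>, (Zset J G \<omega>, Srv \<omega>))) ` outcomes M J \<X> \<S> \<V> \<Z>.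
          (1 + t * \<gamma> tup) * cmiterm (outcomes M J \<X> \<S> \<V> \<Z>) (weight M J p q) (Xrv m) (Zrv J m) (\<lambda>\<omega>. (Zset J G \<omega>, Srv \<omega>)) tup)"
        unfolding \<Omega>_def[symmetric]
      proof (rule cmi_scale[where \<beta>="\<lambda>tup. 1"])
        fix a b cc
        assume "(a, b, cc) \<in> (\<lambda>\<omega>. (Xrv m \<omega>, Zrv J m \<omega>, Zset J G \<omega>, Srv \<omega>)) ` \<Omega>"
        have ev: "\<forall>\<omega>\<in>\<Omega>. E \<omega> \<longrightarrow> snd(snd(snd \<omega>)) k = projr b"
          if "\<And>\<omega>. E \<omega> \<Longrightarrow> Zrv J m \<omega> = b" for E
        proof (intro ballI impI)
          fix \<omega> assume "E \<omega>"
          then have "Zrv J m \<omega> = b" by (rule that)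
          then show "snd(snd(snd \<omega>)) k = projr b" using b kJ by (auto simp: Zrv_def)
        qed
        have iv: "\<forall>x s v z y. E (x,s,v,z(k:=y)) = E (x,s,v,z)"
          if "E = (\<lambda>\<omega>. Xrv m \<omega> = a \<and> (Zset J G \<omega>, Srv \<omega>) = cc) \<or> E = (\<lambda>\<omega>. (Zset J G \<omega>, Srv \<omega>) = cc)" for E
          using that b by (auto simp: Zset_upd Xrv_def Srv_def)
        show "prb \<Omega> (weight M J p (qt k c t q)) (\<lambda>\<omega>. Xrv m \<omega> = a \<and> Zrv J m \<omega> = b \<and> (Zset J G \<omega>, Srv \<omega>) = cc) =
          (1 + t * \<gamma> (a, b, cc)) * prb \<Omega> (weight M J p q) (\<lambda>\<omega>. Xrv m \<omega> = a \<and> Zrv J m \<omega> = b \<and> (Zset J G \<omega>, Srv \<omega>) = cc) \<and>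
          prb \<Omega> (weight M J p (qt k c t q)) (\<lambda>\<omega>. Zrv J m \<omega> = b \<and> (Zset J G \<omega>, Srv \<omega>) = cc) =
          (1 + t * \<gamma> (a, b, cc)) * prb \<Omega> (weight M J p q) (\<lambda>\<omega>. Zrv J m \<omega> = b \<and> (Zset J G \<omega>, Srv \<omega>) = cc) \<and>
          prb \<Omega> (weight M J p (qt k c t q)) (\<lambda>\<omega>. Xrv m \<omega> = a \<and> (Zset J G \<omega>, Srv \<omega>) = cc) =
          1 * prb \<Omega> (weight M J p q) (\<lambda>\<omega>. Xrv m \<omega> = a \<and> (Zset J G \<omega>, Srv \<omega>) = cc) \<and>
          prb \<Omega> (weight M J p (qt k c t q)) (\<lambda>\<omega>. (Zset J G \<omega>, Srv \<omega>) = cc) =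
          1 * prb \<Omega> (weight M J p q) (\<lambda>\<omega>. (Zset J G \<omega>, Srv \<omega>) = cc) \<and>
          (1 + t * \<gamma> (a, b, cc) = 0 \<or> (1::real) \<noteq> 0)"
          unfolding pm
          by (subst f1[OF ev], simp, simp add: \<gamma>_def algebra_simps)+ (simp add: f2[OF iv[OF disjI1[OF refl]]] f2[OF iv[OF disjI2[OF refl]]])
      qed
    qed
  next
    case c
    show ?thesis
    proof (intro exI[of _ "\<lambda>_. 0"] allI)
      fix t
      show "cmi (outcomes M J \<X> \<S> \<V> \<Z>) (weight M J p (qt k c t q)) (Xrv m) (Zrv J m) (\<lambda>\<omega>. (Zset J G \<omega>, Srv \<omega>))
        = (\<Sum>tup\<in>(\<lambda>\<omega>. (Xrv m \<omega>, Zrv J m \<omega>, (Zset J G \<omega>, Srv \<omega>))) ` outcomes M J \<X> \<S> \<V> \<Z>.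
          (1 + t * 0) * cmiterm (outcomes M J \<X> \<S> \<V> \<Z>) (weight M J p q) (Xrv m) (Zrv J m) (\<lambda>\<omega>. (Zset J G \<omega>, Srv \<omega>)) tup)"
        unfolding \<Omega>_def[symmetric]
      proof (rule cmi_scale[where \<beta>="\<lambda>tup. 1"])
        fix a b cc
        assume "(a, b, cc) \<in> (\<lambda>\<omega>. (Xrv m \<omega>, Zrv J m \<omega>, Zset J G \<omega>, Srv \<omega>)) ` \<Omega>"
        have iv: "\<forall>x s v z y. E (x,s,v,z(k:=y)) = E (x,s,v,z)"
          if "E = (\<lambda>\<omega>. Xrv m \<omega> = a \<and> (Zset J G \<omega>, Srv \<omega>) = cc) \<or> E = (\<lambda>\<omega>. (Zset J G \<omega>, Srv \<omega>) = cc)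
              \<or> E = (\<lambda>\<omega>. Xrv m \<omega> = a \<and> Zrv J m \<omega> = b \<and> (Zset J G \<omega>, Srv \<omega>) = cc)
              \<or> E = (\<lambda>\<omega>. Zrv J m \<omega> = b \<and> (Zset J G \<omega>, Srv \<omega>) = cc)" for E
          using that c by (auto simp: Zset_upd Zrv_upd Xrv_def Srv_def)
        show "prb \<Omega> (weight M J p (qt k c t q)) (\<lambda>\<omega>. Xrv m \<omega> = a \<and> Zrv J m \<omega> = b \<and> (Zset J G \<omega>, Srv \<omega>) = cc) =
          (1 + t * 0) * prb \<Omega> (weight M J p q) (\<lambda>\<omega>. Xrv m \<omega> = a \<and> Zrv J m \<omega> = b \<and> (Zset J G \<omega>, Srv \<omega>) = cc) \<and>
          prb \<Omega> (weight M J p (qt k c t q)) (\<lambda>\<omega>. Zrv J m \<omega> = b \<and> (Zset J G \<omega>, Srv \<omega>) = cc) =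
          (1 + t * 0) * prb \<Omega> (weight M J p q) (\<lambda>\<omega>. Zrv J m \<omega> = b \<and> (Zset J G \<omega>, Srv \<omega>) = cc) \<and>
          prb \<Omega> (weight M J p (qt k c t q)) (\<lambda>\<omega>. Xrv m \<omega> = a \<and> (Zset J G \<omega>, Srv \<omega>) = cc) =
          1 * prb \<Omega> (weight M J p q) (\<lambda>\<omega>. Xrv m \<omega> = a \<and> (Zset J G \<omega>, Srv \<omega>) = cc) \<and>
          prb \<Omega> (weight M J p (qt k c t q)) (\<lambda>\<omega>. (Zset J G \<omega>, Srv \<omega>) = cc) =
          1 * prb \<Omega> (weight M J p q) (\<lambda>\<omega>. (Zset J G \<omega>, Srv \<omega>) = cc) \<and>
          (1 + t * 0 = 0 \<or> (1::real) \<noteq> 0)"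
          unfolding pm by (simp add: f2[OF iv[OF disjI1[OF refl]]] f2[OF iv[OF disjI2[OF disjI1[OF refl]]]] f2[OF iv[OF disjI2[OF disjI2[OF disjI1[OF refl]]]]] f2[OF iv[OF disjI2[OF disjI2[OF disjI2[OF refl]]]]])
      qed
    qed
  qed
qed




lemma min_concave:
  fixes F0 F1 F2 :: "'a \<Rightarrow> real"
  assumes "finite (F1 ` A)" "finite (F2 ` A)" "finite (F0 ` A)" "A \<noteq> {}"
    "\<forall>a\<in>A. F1 a + F2 a = 2 * F0 a"
  shows "Min (F1 ` A) + Min (F2 ` A) \<le> 2 * Min (F0 ` A)"
proof -
  have "Min (F0 ` A) \<in> F0 ` A" using assms by (intro Min_in) auto
  then obtain a0 where a0: "a0 \<in> A" "Min (F0 ` A) = F0 a0" by auto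
  have "Min (F1 ` A) \<le> F1 a0" "Min (F2 ` A) \<le> F2 a0" using assms a0 by auto
  then show ?thesis using assms(5) a0 by fastforce
qed

lemma collect_image: "{f \<psi> | \<psi>. P \<psi>} = f ` {\<psi>. P \<psi>}" by blast

lemma fin_psi:
  assumes "finite \<Omega>" "finite Vh"
  shows "finite ((\<lambda>\<psi>. expect \<Omega> w (\<lambda>\<omega>. h \<omega> (\<psi> (g \<omega>)))) ` {\<psi>. \<forall>a. \<psi> a \<in> Vh})"
proof (rule finite_subset)
  show "(\<lambda>\<psi>. expect \<Omega> w (\<lambda>\<omega>. h \<omega> (\<psi> (g \<omega>)))) ` {\<psi>. \<forall>a. \<psi> a \<in> Vh}
     \<subseteq> (\<lambda>\<psi>. expect \<Omega> w (\<lambda>\<omega>. h \<omega> (\<psi> (g \<omega>)))) ` PiE (g ` \<Omega>) (\<lambda>_. Vh)"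
  proof
    fix u assume "u \<in> (\<lambda>\<psi>. expect \<Omega> w (\<lambda>\<omega>. h \<omega> (\<psi> (g \<omega>)))) ` {\<psi>. \<forall>a. \<psi> a \<in> Vh}"
    then obtain \<psi> where \<psi>: "\<forall>a. \<psi> a \<in> Vh" "u = expect \<Omega> w (\<lambda>\<omega>. h \<omega> (\<psi> (g \<omega>)))" by auto
    have "u = expect \<Omega> w (\<lambda>\<omega>. h \<omega> (restrict \<psi> (g ` \<Omega>) (g \<omega>)))"
      unfolding \<psi>(2) expect_def by (rule sum.cong) auto
    moreover have "restrict \<psi> (g ` \<Omega>) \<in> PiE (g ` \<Omega>) (\<lambda>_. Vh)" using \<psi>(1) by auto
    ultimately show "u \<in> (\<lambda>\<psi>. expect \<Omega> w (\<lambda>\<omega>. h \<omega> (\<psi> (g \<omega>)))) ` PiE (g ` \<Omega>) (\<lambda>_. Vh)" by blast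
  qed
  show "finite ((\<lambda>\<psi>. expect \<Omega> w (\<lambda>\<omega>. h \<omega> (\<psi> (g \<omega>)))) ` PiE (g ` \<Omega>) (\<lambda>_. Vh))"
    using assms by (intro finite_imageI finite_PiE) auto
qed

lemma expect_mod:
  assumes k: "k \<in> {J+1..M}"
  shows "expect \<Omega> (weight M J p (qt k c t q)) f
     = expect \<Omega> (weight M J p q) f + t * expect \<Omega> (\<lambda>\<omega>. weight M J p q \<omega> * c (snd(snd(snd \<omega>)) k)) f"
  unfolding expect_def qt_def weight_mod[OF k]
  by (simp add: algebra_simps sum.distrib sum_distrib_left)

lemma qt0: "qt k c 0 q = q"
  unfolding qt_def by auto

lemma DP_concave:
  fixes \<X> :: "nat \<Rightarrow> 'x set" and \<S> :: "'s set" and Vh :: "nat \<Rightarrow> 'r set"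
  assumes k: "k \<in> {J+1..M}" and fin: "finite (outcomes M J \<X> \<S> \<V> \<Z>)"
    and vh: "finite (Vh l)" "Vh l \<noteq> {}"
  shows "DP M J L \<X> \<S> \<V> p Vh d \<Z> (qt k c t q) l + DP M J L \<X> \<S> \<V> p Vh d \<Z> (qt k c (-t) q) l
      \<le> 2 * DP M J L \<X> \<S> \<V> p Vh d \<Z> q l"
proof (cases "l \<in> {1..L}")
  case False then show ?thesis unfolding DP_def by (simp only: if_False)
next
  case True
  define \<Omega> where "\<Omega> = outcomes M J \<X> \<S> \<V> \<Z>"
  define F where "F r \<psi> = expect \<Omega> (weight M J p r) (\<lambda>\<omega>. d l (Vrv \<omega>) (\<psi> (Zset J {1..M} \<omega>, Srv \<omega>)))" for r \<psi>
  have e: "DP M J L \<X> \<S> \<V> p Vh d \<Z> r l = Min (F r ` {\<psi>. \<forall>a. \<psi> a \<in> Vh l})" for r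
    using True unfolding DP_def F_def \<Omega>_def collect_image by simp
  have fn: "finite (F r ` {\<psi>. \<forall>a. \<psi> a \<in> Vh l})" for r
    unfolding F_def by (rule fin_psi) (use fin vh in \<open>auto simp: \<Omega>_def\<close>)
  have ne: "{\<psi> :: (nat \<Rightarrow> 'x + nat) \<times> 's \<Rightarrow> 'r. \<forall>a. \<psi> a \<in> Vh l} \<noteq> {}"
  proof -
    obtain r0 where "r0 \<in> Vh l" using vh by blast
    then have "(\<lambda>_. r0) \<in> {\<psi>. \<forall>a. \<psi> a \<in> Vh l}" by simp
    then show ?thesis by auto
  qed
  show ?thesis unfolding e
    by (rule min_concave[OF fn fn fn ne]) (simp add: F_def expect_mod[OF k])
qed




lemma ext_mid:
  fixes pt :: "'a::real_vector"
  assumes "pt extreme_point_of S" "a \<in> S" "b \<in> S" "pt = midpoint a b"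
  shows "a = pt \<and> b = pt"
proof -
  have "a = b"
    using assms midpoint_in_open_segment[of a b] unfolding extreme_point_of_def by blast
  thus ?thesis using assms(4) by (simp add: midpoint_def scaleR_2[symmetric] scaleR_add_right[symmetric])
qed

lemma mid_pair:
  fixes a b :: "(nat \<Rightarrow> real) \<times> (nat \<Rightarrow> real)"
  shows "midpoint a b = (\<lambda>i. (fst a i + fst b i) / 2, \<lambda>l. (snd a l + snd b l) / 2)"
  by (cases a, cases b) (simp add: midpoint_def scaleR_fun_def fun_eq_iff)

lemma RP_out: assumes "i \<notin> {1..M}" shows "RP M J \<X> \<S> \<V> p P \<Z> q i = 0"
  unfolding RP_def by (rule if_not_P[OF assms])

lemma DP_out: assumes "l \<notin> {1..L}" shows "DP M J L \<X> \<S> \<V> p Vh d \<Z> q l = 0"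
  unfolding DP_def by (rule if_not_P[OF assms])

context
  fixes M J L :: nat and \<X> :: "nat \<Rightarrow> 'x set" and \<S> :: "'s set" and \<V> :: "'v set"
    and p :: "(nat \<Rightarrow> 'x) \<Rightarrow> 's \<Rightarrow> 'v \<Rightarrow> real"
    and Vh :: "nat \<Rightarrow> 'r set" and d :: "nat \<Rightarrow> 'v \<Rightarrow> 'r \<Rightarrow> real" and P :: "nat \<Rightarrow> nat"
  assumes finX: "\<forall>m\<in>{1..M}. finite (\<X> m)" and finS: "finite \<S>" and finV: "finite \<V>"
    and vh: "\<forall>l\<in>{1..L}. finite (Vh l) \<and> Vh l \<noteq> {}"
begin

abbreviation cor where "cor Z q \<equiv> (RP M J \<X> \<S> \<V> p P Z q, DP M J L \<X> \<S> \<V> p Vh d Z q)"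
abbreviation reg where "reg \<equiv> region M J L \<X> \<S> \<V> p Vh d P"

lemma fin_out: "test_channels M J \<X> Z q \<Longrightarrow> finite (outcomes M J \<X> \<S> \<V> Z)"
  unfolding outcomes_def test_channels_def using finX finS finV
  by (intro finite_cartesian_product finite_PiE) auto

lemma in_reg:
  assumes "test_channels M J \<X> Z q" "\<forall>i. i \<notin> {1..M} \<longrightarrow> R i = 0" "\<forall>l. l \<notin> {1..L} \<longrightarrow> D l = 0"
    "\<forall>i\<in>{1..M}. RP M J \<X> \<S> \<V> p P Z q i \<le> R i" "\<forall>l\<in>{1..L}. DP M J L \<X> \<S> \<V> p Vh d Z q l \<le> D l"
  shows "(R, D) \<in> reg"
  unfolding region_def regionq_def using assms by blast

lemma in_hull: "x \<in> reg \<Longrightarrow> x \<in> convex hull reg"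
  by (rule hull_inc)

lemma ext_cor:
  assumes tc: "test_channels M J \<X> Z q" and ext: "pt extreme_point_of (convex hull reg)"
    and pt: "pt \<in> regionq M J L \<X> \<S> \<V> p Vh d P Z q"
  shows "pt = cor Z q"
proof -
  obtain R D where RD: "pt = (R, D)" by (cases pt) auto
  define b where "b = (\<lambda>i. 2 * R i - RP M J \<X> \<S> \<V> p P Z q i, \<lambda>l. 2 * D l - DP M J L \<X> \<S> \<V> p Vh d Z q l)"
  have h: "\<forall>i. i \<notin> {1..M} \<longrightarrow> R i = 0" "\<forall>l. l \<notin> {1..L} \<longrightarrow> D l = 0"
    "\<forall>i\<in>{1..M}. RP M J \<X> \<S> \<V> p P Z q i \<le> R i" "\<forall>l\<in>{1..L}. DP M J L \<X> \<S> \<V> p Vh d Z q l \<le> D l"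
    using pt unfolding RD regionq_def by auto
  have a: "cor Z q \<in> convex hull reg"
    by (intro in_hull in_reg[OF tc]) (auto simp: RP_out DP_out)
  have bb: "b \<in> convex hull reg"
    unfolding b_def using h by (intro in_hull in_reg[OF tc]) (auto simp: RP_out DP_out)
  have "pt = midpoint (cor Z q) b"
    unfolding mid_pair RD b_def by (simp add: fun_eq_iff)
  from ext_mid[OF ext a bb this] show ?thesis by simp
qed

lemma ext_two:
  assumes tc1: "test_channels M J \<X> Z1 q1" and tc2: "test_channels M J \<X> Z2 q2"
    and ext: "pt extreme_point_of (convex hull reg)"
    and pt: "pt = cor Z0 q0"
    and hR: "\<forall>i. RP M J \<X> \<S> \<V> p P Z1 q1 i + RP M J \<X> \<S> \<V> p P Z2 q2 i = 2 * RP M J \<X> \<S> \<V> p P Z0 q0 i"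
    and hD: "\<forall>l. DP M J L \<X> \<S> \<V> p Vh d Z1 q1 l + DP M J L \<X> \<S> \<V> p Vh d Z2 q2 l \<le> 2 * DP M J L \<X> \<S> \<V> p Vh d Z0 q0 l"
  shows "pt = cor Z1 q1"
proof -
  define R1 where "R1 = RP M J \<X> \<S> \<V> p P Z1 q1"
  define R2 where "R2 = RP M J \<X> \<S> \<V> p P Z2 q2"
  define R0 where "R0 = RP M J \<X> \<S> \<V> p P Z0 q0"
  define D1 where "D1 = DP M J L \<X> \<S> \<V> p Vh d Z1 q1"
  define D2 where "D2 = DP M J L \<X> \<S> \<V> p Vh d Z2 q2"
  define D0 where "D0 = DP M J L \<X> \<S> \<V> p Vh d Z0 q0"
  define e where "e l = D0 l - (D1 l + D2 l) / 2" for l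
  have e0: "e l \<ge> 0" for l using hD[rule_format, of l] unfolding e_def D0_def D1_def D2_def by (simp add: field_simps)
  have eout: "l \<notin> {1..L} \<Longrightarrow> e l = 0" for l unfolding e_def D0_def D1_def D2_def by (simp add: DP_out)
  have p1: "(R1, \<lambda>l. D1 l + e l) \<in> convex hull reg"
    by (intro in_hull in_reg[OF tc1]) (auto simp: R1_def D1_def RP_out DP_out eout e0)
  have p2: "(R2, \<lambda>l. D2 l + e l) \<in> convex hull reg"
    by (intro in_hull in_reg[OF tc2]) (auto simp: R2_def D2_def RP_out DP_out eout e0)
  have "pt = midpoint (R1, \<lambda>l. D1 l + e l) (R2, \<lambda>l. D2 l + e l)"
    unfolding mid_pair pt using hR by (auto simp: fun_eq_iff e_def R1_def R2_def R0_def D0_def field_simps)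
  from ext_mid[OF ext p1 p2 this] have q1: "pt = (R1, \<lambda>l. D1 l + e l)" by simp
  have p3: "(R1, \<lambda>l. D1 l + 2 * e l) \<in> convex hull reg"
    by (intro in_hull in_reg[OF tc1]) (auto simp: R1_def D1_def RP_out DP_out eout e0)
  have c1: "cor Z1 q1 \<in> convex hull reg"
    by (intro in_hull in_reg[OF tc1]) (auto simp: RP_out DP_out)
  have "pt = midpoint (cor Z1 q1) (R1, \<lambda>l. D1 l + 2 * e l)"
    unfolding mid_pair q1 by (simp add: fun_eq_iff R1_def D1_def)
  from ext_mid[OF ext c1 p3 this] show ?thesis by simp
qed


lemma reduce:
  assumes tc: "test_channels M J \<X> Z q" and ext: "pt extreme_point_of (convex hull reg)"
    and pt: "pt = cor Z q" and k: "k \<in> {J+1..M}" and cd: "card (Z k) > card (\<X> k)"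
  shows "\<exists>Z' q'. test_channels M J \<X> Z' q' \<and> pt = cor Z' q' \<and> (\<forall>j. j \<noteq> k \<longrightarrow> Z' j = Z j) \<and> card (Z' k) < card (Z k)"
proof -
  have finZ: "finite (Z k)" using tc k unfolding test_channels_def by auto
  have finXk: "finite (\<X> k)" using finX k by auto
  obtain c where c: "\<exists>z\<in>Z k. c z \<noteq> 0" "\<forall>x\<in>\<X> k. (\<Sum>z\<in>Z k. c z * q k x z) = 0"
    using lin_dep[OF finXk finZ cd, of "\<lambda>x z. q k x z"] by blast
  have sq: "\<forall>x\<in>\<X> k. (\<Sum>y\<in>Z k. q k x y * c y) = 0" using c(2) by (simp add: mult.commute)
  define mx where "mx = Max ((\<lambda>z. \<bar>c z\<bar>) ` Z k)"
  have Zne: "Z k \<noteq> {}" using c(1) by auto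
  have mxin: "mx \<in> (\<lambda>z. \<bar>c z\<bar>) ` Z k" unfolding mx_def using finZ Zne by (intro Max_in) auto
  then obtain z1 where z1: "z1 \<in> Z k" "\<bar>c z1\<bar> = mx" by auto
  have mxge: "\<bar>c z\<bar> \<le> mx" if "z \<in> Z k" for z unfolding mx_def using finZ that by (intro Max_ge) auto
  have mxpos: "mx > 0" using c(1) mxge by force
  define h where "h = 1 / mx"
  have tct: "test_channels M J \<X> Z (qt k c t q)" if t: "\<bar>t\<bar> \<le> h" for t
    unfolding test_channels_def
  proof (rule ballI)
    fix j assume j: "j \<in> {J+1..M}"
    have "finite (Z j)" using tc j unfolding test_channels_def by auto
    moreover have "(\<forall>z\<in>Z j. 0 \<le> qt k c t q j x z) \<and> (\<Sum>z\<in>Z j. qt k c t q j x z) = 1" if x: "x \<in> \<X> j" for x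
    proof
    show "\<forall>z\<in>Z j. 0 \<le> qt k c t q j x z"
    proof
      fix z assume z: "z \<in> Z j"
      have q0: "0 \<le> q j x z" using tc j x z unfolding test_channels_def by auto
      show "0 \<le> qt k c t q j x z"
      proof (cases "j = k")
        case True
        have "\<bar>t * c z\<bar> \<le> h * mx" unfolding abs_mult
          using t mxge[of z] z True by (intro mult_mono) auto
        also have "h * mx = 1" using mxpos by (simp add: h_def)
        finally have "0 \<le> 1 + t * c z" by linarith
        then show ?thesis using q0 True by (simp add: qt_def)
      next
        case False then show ?thesis using q0 by (simp add: qt_def)
      qed
    qed
    show "(\<Sum>z\<in>Z j. qt k c t q j x z) = 1"
    proof (cases "j = k")
      case True
      have "(\<Sum>z\<in>Z j. qt k c t q j x z) = (\<Sum>z\<in>Z k. q k x z) + t * (\<Sum>z\<in>Z k. q k x z * c z)"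
        using True by (simp add: qt_def algebra_simps sum.distrib sum_distrib_left)
      then show ?thesis using tc j x sq True unfolding test_channels_def by auto
    next
      case False then show ?thesis using tc j x unfolding test_channels_def by (simp add: qt_def)
    qed
    qed
    ultimately show "finite (Z j) \<and> (\<forall>x\<in>\<X> j. (\<forall>z\<in>Z j. 0 \<le> qt k c t q j x z) \<and> (\<Sum>z\<in>Z j. qt k c t q j x z) = 1)" by blast
  qed
  have fo: "finite (outcomes M J \<X> \<S> \<V> Z)" by (rule fin_out[OF tc])
  have hR: "\<forall>i. RP M J \<X> \<S> \<V> p P Z (qt k c t q) i + RP M J \<X> \<S> \<V> p P Z (qt k c (-t) q) i
            = 2 * RP M J \<X> \<S> \<V> p P Z q i" for t
  proof
    fix i
    show "RP M J \<X> \<S> \<V> p P Z (qt k c t q) i + RP M J \<X> \<S> \<V> p P Z (qt k c (-t) q) i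
            = 2 * RP M J \<X> \<S> \<V> p P Z q i"
    proof (cases "i \<in> {1..M}")
      case False then show ?thesis by (simp add: RP_out)
    next
      case True
      define G where "G = P ` {1..<inv_into {1..M} P i}"
      obtain \<gamma> where g: "\<forall>t. cmi (outcomes M J \<X> \<S> \<V> Z) (weight M J p (qt k c t q)) (Xrv i) (Zrv J i) (\<lambda>\<omega>. (Zset J G \<omega>, Srv \<omega>))
     = (\<Sum>tup\<in>(\<lambda>\<omega>. (Xrv i \<omega>, Zrv J i \<omega>, (Zset J G \<omega>, Srv \<omega>))) ` outcomes M J \<X> \<S> \<V> Z.
          (1 + t * \<gamma> tup) * cmiterm (outcomes M J \<X> \<S> \<V> Z) (weight M J p q) (Xrv i) (Zrv J i) (\<lambda>\<omega>. (Zset J G \<omega>, Srv \<omega>)) tup)"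
        using cmi_mod[where k=k and q=q and c=c and \<Z>=Z and \<X>=\<X> and M=M and J=J and \<S>=\<S> and \<V>=\<V> and p=p and m=i and G=G, OF k sq fo] by blast
      have "RP M J \<X> \<S> \<V> p P Z r i = cmi (outcomes M J \<X> \<S> \<V> Z) (weight M J p r) (Xrv i) (Zrv J i) (\<lambda>\<omega>. (Zset J G \<omega>, Srv \<omega>))" for r
        unfolding RP_def G_def using True by (simp add: Let_def)
      note rp = this
      have gen: "(\<Sum>tup\<in>T. (1 + t*\<gamma> tup) * f tup) + (\<Sum>tup\<in>T. (1 + (-t)*\<gamma> tup) * f tup)
         = 2 * (\<Sum>tup\<in>T. (1 + 0*\<gamma> tup) * f tup)" for T :: "('x \<times> ('x + nat) \<times> (nat \<Rightarrow> 'x + nat) \<times> 's) set" and f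
        unfolding sum.distrib[symmetric] sum_distrib_left by (rule sum.cong) (auto simp: algebra_simps)
      have g0: "cmi (outcomes M J \<X> \<S> \<V> Z) (weight M J p q) (Xrv i) (Zrv J i) (\<lambda>\<omega>. (Zset J G \<omega>, Srv \<omega>))
     = (\<Sum>tup\<in>(\<lambda>\<omega>. (Xrv i \<omega>, Zrv J i \<omega>, (Zset J G \<omega>, Srv \<omega>))) ` outcomes M J \<X> \<S> \<V> Z.
          (1 + 0 * \<gamma> tup) * cmiterm (outcomes M J \<X> \<S> \<V> Z) (weight M J p q) (Xrv i) (Zrv J i) (\<lambda>\<omega>. (Zset J G \<omega>, Srv \<omega>)) tup)"
        using g[rule_format, of 0] by (simp only: qt0)
      show ?thesis unfolding rp g[rule_format, of t] g[rule_format, of "-t"] g0 by (rule gen)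
    qed
  qed
  have hD: "\<forall>l. DP M J L \<X> \<S> \<V> p Vh d Z (qt k c t q) l + DP M J L \<X> \<S> \<V> p Vh d Z (qt k c (-t) q) l
            \<le> 2 * DP M J L \<X> \<S> \<V> p Vh d Z q l" for t
  proof
    fix l
    show "DP M J L \<X> \<S> \<V> p Vh d Z (qt k c t q) l + DP M J L \<X> \<S> \<V> p Vh d Z (qt k c (-t) q) l
            \<le> 2 * DP M J L \<X> \<S> \<V> p Vh d Z q l"
    proof (cases "l \<in> {1..L}")
      case False then show ?thesis by (simp add: DP_out)
    next
      case True
      then show ?thesis using vh by (intro DP_concave[OF k fo]) auto
    qed
  qed
  define t1 where "t1 = (if c z1 > 0 then - h else h)"
  have t1h: "\<bar>t1\<bar> \<le> h" "\<bar>-t1\<bar> \<le> h" using mxpos by (auto simp: t1_def h_def)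
  have t1z: "1 + t1 * c z1 = 0"
    using z1(2) mxpos by (auto simp: t1_def h_def abs_if split: if_splits)
  define q' where "q' = qt k c t1 q"
  have pt1: "pt = cor Z q'"
    unfolding q'_def by (rule ext_two[OF tct[OF t1h(1)] tct[OF t1h(2)] ext pt hR hD])
  define Z' where "Z' = Z(k := Z k - {z1})"
  have tc1: "test_channels M J \<X> Z q'" unfolding q'_def by (rule tct[OF t1h(1)])
  have tc': "test_channels M J \<X> Z' q'"
    unfolding test_channels_def
  proof (rule ballI)
    fix j assume j: "j \<in> {J+1..M}"
    have "finite (Z' j)" using tc1 j unfolding test_channels_def Z'_def by auto
    moreover have "(\<forall>z\<in>Z' j. 0 \<le> q' j x z) \<and> (\<Sum>z\<in>Z' j. q' j x z) = 1" if x: "x \<in> \<X> j" for x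
    proof
    show "\<forall>z\<in>Z' j. 0 \<le> q' j x z" using tc1 j x unfolding test_channels_def Z'_def by auto
    show "(\<Sum>z\<in>Z' j. q' j x z) = 1"
    proof (cases "j = k")
      case True
      have "(\<Sum>z\<in>Z k. q' k x z) = q' k x z1 + (\<Sum>z\<in>Z k - {z1}. q' k x z)"
        using finZ z1(1) by (simp add: sum.remove)
      moreover have "q' k x z1 = 0" using t1z by (simp add: q'_def qt_def)
      ultimately show ?thesis using tc1 j x True unfolding test_channels_def Z'_def by auto
    next
      case False then show ?thesis using tc1 j x unfolding test_channels_def Z'_def by auto
    qed
    qed
    ultimately show "finite (Z' j) \<and> (\<forall>x\<in>\<X> j. (\<forall>z\<in>Z' j. 0 \<le> q' j x z) \<and> (\<Sum>z\<in>Z' j. q' j x z) = 1)" by blast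
  qed
  have sub: "outcomes M J \<X> \<S> \<V> Z' \<subseteq> outcomes M J \<X> \<S> \<V> Z"
  proof -
    have "PiE {J+1..M} Z' \<subseteq> PiE {J+1..M} Z" by (rule PiE_mono) (auto simp: Z'_def)
    then show ?thesis unfolding outcomes_def by auto
  qed
  have zero: "\<forall>\<omega>\<in>outcomes M J \<X> \<S> \<V> Z - outcomes M J \<X> \<S> \<V> Z'. weight M J p q' \<omega> = 0"
  proof
    fix \<omega> assume w: "\<omega> \<in> outcomes M J \<X> \<S> \<V> Z - outcomes M J \<X> \<S> \<V> Z'"
    obtain x s v z where wx: "\<omega> = (x, s, v, z)" by (cases \<omega>) auto
    have zk: "z k = z1"
    proof (rule ccontr)
      assume "z k \<noteq> z1"
      then have "z \<in> PiE {J+1..M} Z'" using w unfolding wx outcomes_def Z'_def by (auto simp: PiE_iff)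
      then show False using w unfolding wx outcomes_def by auto
    qed
    have "q' k (x k) (z k) = 0" using zk t1z by (simp add: q'_def qt_def)
    then have "(\<Prod>j\<in>{J+1..M}. q' j (x j) (z j)) = 0" using k by (intro prod_zero) auto
    then show "weight M J p q' \<omega> = 0" unfolding wx weight_def by simp
  qed
  have RPe: "RP M J \<X> \<S> \<V> p P Z' q' = RP M J \<X> \<S> \<V> p P Z q'"
    unfolding RP_def by (simp only: cmi_mono[OF sub fo zero])
  have DPe: "DP M J L \<X> \<S> \<V> p Vh d Z' q' = DP M J L \<X> \<S> \<V> p Vh d Z q'"
    unfolding DP_def by (simp only: expect_mono[OF sub fo zero])
  have c1: "card (Z' k) < card (Z k)" unfolding Z'_def fun_upd_same by (rule card_Diff1_less[OF finZ z1(1)])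
  have c2: "\<forall>j. j \<noteq> k \<longrightarrow> Z' j = Z j" unfolding Z'_def by simp
  have c3: "pt = cor Z' q'" unfolding RPe DPe by (rule pt1)
  show ?thesis by (intro exI[of _ Z'] exI[of _ q'] conjI tc' c1 c2 c3)
qed


lemma main_ind:
  assumes ext: "pt extreme_point_of (convex hull reg)"
  shows "\<forall>Z q. test_channels M J \<X> Z q \<and> pt = cor Z q \<and> (\<Sum>k\<in>{J+1..M}. card (Z k)) = n \<longrightarrow>
     (\<exists>Z' q'. test_channels M J \<X> Z' q' \<and> (\<forall>k\<in>{J+1..M}. card (Z' k) \<le> card (\<X> k)) \<and> pt = cor Z' q')"
proof (induction n rule: less_induct)
  case (less n)
  show ?case
  proof (intro allI impI)
    fix Z q assume a: "test_channels M J \<X> Z q \<and> pt = cor Z q \<and> (\<Sum>k\<in>{J+1..M}. card (Z k)) = n"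
    show "\<exists>Z' q'. test_channels M J \<X> Z' q' \<and> (\<forall>k\<in>{J+1..M}. card (Z' k) \<le> card (\<X> k)) \<and> pt = cor Z' q'"
    proof (cases "\<forall>k\<in>{J+1..M}. card (Z k) \<le> card (\<X> k)")
      case True then show ?thesis using a by blast
    next
      case False
      then obtain k where k: "k \<in> {J+1..M}" "card (Z k) > card (\<X> k)" by (auto simp: not_le)
      from reduce[OF conjunct1[OF a] ext conjunct1[OF conjunct2[OF a]] k]
      obtain Z' q' where r: "test_channels M J \<X> Z' q'" "pt = cor Z' q'"
        "\<forall>j. j \<noteq> k \<longrightarrow> Z' j = Z j" "card (Z' k) < card (Z k)" by blast
      have "(\<Sum>j\<in>{J+1..M}. card (Z' j)) < (\<Sum>j\<in>{J+1..M}. card (Z j))"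
      proof (rule sum_strict_mono_ex1)
        show "finite {J+1..M}" by simp
        show "\<forall>j\<in>{J+1..M}. card (Z' j) \<le> card (Z j)"
        proof
          fix j assume "j \<in> {J+1..M}"
          show "card (Z' j) \<le> card (Z j)" using r(3,4) by (cases "j = k") auto
        qed
        show "\<exists>j\<in>{J+1..M}. card (Z' j) < card (Z j)" using r(4) k(1) by blast
      qed
      then have lt: "(\<Sum>j\<in>{J+1..M}. card (Z' j)) < n" using a by simp
      show ?thesis using less.IH[OF lt] r(1,2) by blast
    qed
  qed
qed

end

theorem lemma5:
  fixes M J L :: nat
    and \<X> :: "nat \<Rightarrow> 'x set" and \<S> :: "'s set" and \<V> :: "'v set"
    and p :: "(nat \<Rightarrow> 'x) \<Rightarrow> 's \<Rightarrow> 'v \<Rightarrow> real"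
    and Vh :: "nat \<Rightarrow> 'r set" and d :: "nat \<Rightarrow> 'v \<Rightarrow> 'r \<Rightarrow> real" and dmax :: "nat \<Rightarrow> real"
    and P :: "nat \<Rightarrow> nat"
    and pt :: "(nat \<Rightarrow> real) \<times> (nat \<Rightarrow> real)"
  assumes "M \<ge> 1" and "J \<le> M" and "L \<ge> 1"
    and "\<forall>m\<in>{1..M}. finite (\<X> m)" and "finite \<S>" and "finite \<V>"
    and "\<forall>x\<in>PiE {1..M} \<X>. \<forall>s\<in>\<S>. \<forall>v\<in>\<V>. 0 \<le> p x s v"
    and "(\<Sum>x\<in>PiE {1..M} \<X>. \<Sum>s\<in>\<S>. \<Sum>v\<in>\<V>. p x s v) = 1"
    and "\<forall>l\<in>{1..L}. finite (Vh l) \<and> Vh l \<noteq> {}"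
    and "\<forall>l\<in>{1..L}. \<forall>v\<in>\<V>. \<forall>r\<in>Vh l. 0 \<le> d l v r \<and> d l v r \<le> dmax l"
    and "P permutes {1..M}"
    and "pt \<in> region M J L \<X> \<S> \<V> p Vh d P"
    and "pt extreme_point_of (convex hull (region M J L \<X> \<S> \<V> p Vh d P))"
  shows "\<exists>\<Z> q. test_channels M J \<X> \<Z> q \<and> (\<forall>k\<in>{J+1..M}. card (\<Z> k) \<le> card (\<X> k)) \<and>
           pt = (RP M J \<X> \<S> \<V> p P \<Z> q, DP M J L \<X> \<S> \<V> p Vh d \<Z> q)"
proof -
  from assms(12) obtain Z q where tc: "test_channels M J \<X> Z q" and ptq: "pt \<in> regionq M J L \<X> \<S> \<V> p Vh d P Z q"
    unfolding region_def by blast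
  have pc: "pt = (RP M J \<X> \<S> \<V> p P Z q, DP M J L \<X> \<S> \<V> p Vh d Z q)"
    by (rule ext_cor[OF assms(4,5,6,9) tc assms(13) ptq])
  show ?thesis
    using main_ind[OF assms(4,5,6,9) assms(13), rule_format, of Z q "\<Sum>k\<in>{J+1..M}. card (Z k)"] tc pc
    by blast
qed


end
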